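(* Let $\mathbf k$ be an algebraically closed field of characteristic zero, $n\geq 1$, $\zeta\in\mathbf k$, and let $\mathcal D_{\zeta,n}$ be the monoidal category defined below. Let $k\in\mathbb N$ be divisible by $n$, say $k=ln$. Then $\mathrm{Hom}_{\mathcal D_{\zeta,n}}(k,0)$ is the $\mathbf k$-span of $f_n^{\otimes l}:k\to 0$.
   Context: $\mathcal D_{\zeta,n}$ is the strict $\mathbf k$-linear monoidal category whose objects are the natural numbers $k\in\mathbb N$ (thought of as $k$ points), with tensor product $k\otimes l=k+l$ on objects and unit $0$, and whose morphisms are generated under composition, tensor product and $\mathbf k$-linear combinations by the identity $\mathrm{id}_1$ of $1$ and two morphisms $f_n:n\to 0$ and $g_n:0\to n$, subject to the relations $f_n\circ g_n=\mathrm{id}_0$, $g_n\circ f_n=\mathrm{id}_n$, and $\mathrm{id}_1\otimes f_n=\zeta\,(f_n\otimes\mathrm{id}_1)$ as morphisms $n+1\to 1$. *)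

theory Defs
  imports "HOL-Computational_Algebra.Polynomial"
begin

text \<open>Syntactic presentation of the strict k-linear monoidal category D_{zeta,n}. F stands for f_n : n -> 0, G for g_n : 0 -> n,
  Id m for the identity of the object m (Id m is id_1 tensored m times, Id 0 the unit identity).
  Comp a b means a composed after b.\<close>

datatype 'k mexp =
    Id nat
  | F
  | G
  | Comp "'k mexp" "'k mexp"
  | Tens "'k mexp" "'k mexp"
  | Scal 'k "'k mexp"
  | Add "'k mexp" "'k mexp"
  | Zero nat nat

inductive typed :: "nat \<Rightarrow> 'k mexp \<Rightarrow> nat \<Rightarrow> nat \<Rightarrow> bool" for n :: nat where
  ty_id: "typed n (Id m) m m"
| ty_F: "typed n F n 0"
| ty_G: "typed n G 0 n"
| ty_comp: "typed n a y z \<Longrightarrow> typed n b x y \<Longrightarrow> typed n (Comp a b) x z"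
| ty_tens: "typed n a x y \<Longrightarrow> typed n b x' y' \<Longrightarrow> typed n (Tens a b) (x + x') (y + y')"
| ty_scal: "typed n a x y \<Longrightarrow> typed n (Scal c a) x y"
| ty_add: "typed n a x y \<Longrightarrow> typed n b x y \<Longrightarrow> typed n (Add a b) x y"
| ty_zero: "typed n (Zero x y) x y"

text \<open>eqv n \<zeta> a b x y: a and b are equal as morphisms x -> y of D_{\<zeta>,n}, i.e. the
  congruence generated by the axioms of a strict k-linear monoidal category and the
  defining relations of D_{\<zeta>,n}.\<close>
inductive eqv :: "nat \<Rightarrow> 'k::field \<Rightarrow> 'k mexp \<Rightarrow> 'k mexp \<Rightarrow> nat \<Rightarrow> nat \<Rightarrow> bool"
  for n :: nat and \<zeta> :: "'k::field" where
  e_refl: "typed n a x y \<Longrightarrow> eqv n \<zeta> a a x y"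
| e_sym: "eqv n \<zeta> a b x y \<Longrightarrow> eqv n \<zeta> b a x y"
| e_trans: "eqv n \<zeta> a b x y \<Longrightarrow> eqv n \<zeta> b c x y \<Longrightarrow> eqv n \<zeta> a c x y"
| e_comp: "eqv n \<zeta> a a' y z \<Longrightarrow> eqv n \<zeta> b b' x y \<Longrightarrow> eqv n \<zeta> (Comp a b) (Comp a' b') x z"
| e_tens: "eqv n \<zeta> a a' x y \<Longrightarrow> eqv n \<zeta> b b' x' y' \<Longrightarrow>
    eqv n \<zeta> (Tens a b) (Tens a' b') (x + x') (y + y')"
| e_scal: "eqv n \<zeta> a a' x y \<Longrightarrow> eqv n \<zeta> (Scal c a) (Scal c a') x y"
| e_add: "eqv n \<zeta> a a' x y \<Longrightarrow> eqv n \<zeta> b b' x y \<Longrightarrow> eqv n \<zeta> (Add a b) (Add a' b') x y"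
| e_comp_assoc: "typed n c w x \<Longrightarrow> typed n b x y \<Longrightarrow> typed n a y z \<Longrightarrow>
    eqv n \<zeta> (Comp (Comp a b) c) (Comp a (Comp b c)) w z"
| e_id_l: "typed n a x y \<Longrightarrow> eqv n \<zeta> (Comp (Id y) a) a x y"
| e_id_r: "typed n a x y \<Longrightarrow> eqv n \<zeta> (Comp a (Id x)) a x y"
| e_tens_assoc: "typed n a x y \<Longrightarrow> typed n b x' y' \<Longrightarrow> typed n c x'' y'' \<Longrightarrow>
    eqv n \<zeta> (Tens (Tens a b) c) (Tens a (Tens b c)) (x + x' + x'') (y + y' + y'')"
| e_unit_l: "typed n a x y \<Longrightarrow> eqv n \<zeta> (Tens (Id 0) a) a x y"
| e_unit_r: "typed n a x y \<Longrightarrow> eqv n \<zeta> (Tens a (Id 0)) a x y"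
| e_id_tens: "eqv n \<zeta> (Tens (Id m) (Id m')) (Id (m + m')) (m + m') (m + m')"
| e_interchange: "typed n a y z \<Longrightarrow> typed n b x y \<Longrightarrow> typed n c y' z' \<Longrightarrow> typed n d x' y' \<Longrightarrow>
    eqv n \<zeta> (Comp (Tens a c) (Tens b d)) (Tens (Comp a b) (Comp c d)) (x + x') (z + z')"
| e_add_assoc: "typed n a x y \<Longrightarrow> typed n b x y \<Longrightarrow> typed n c x y \<Longrightarrow>
    eqv n \<zeta> (Add (Add a b) c) (Add a (Add b c)) x y"
| e_add_comm: "typed n a x y \<Longrightarrow> typed n b x y \<Longrightarrow> eqv n \<zeta> (Add a b) (Add b a) x y"
| e_add_zero: "typed n a x y \<Longrightarrow> eqv n \<zeta> (Add a (Zero x y)) a x y"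
| e_add_inv: "typed n a x y \<Longrightarrow> eqv n \<zeta> (Add a (Scal (-1) a)) (Zero x y) x y"
| e_scal_one: "typed n a x y \<Longrightarrow> eqv n \<zeta> (Scal 1 a) a x y"
| e_scal_scal: "typed n a x y \<Longrightarrow> eqv n \<zeta> (Scal c (Scal d a)) (Scal (c * d) a) x y"
| e_scal_add: "typed n a x y \<Longrightarrow> typed n b x y \<Longrightarrow>
    eqv n \<zeta> (Scal c (Add a b)) (Add (Scal c a) (Scal c b)) x y"
| e_add_scal: "typed n a x y \<Longrightarrow> eqv n \<zeta> (Scal (c + d) a) (Add (Scal c a) (Scal d a)) x y"
| e_comp_add_l: "typed n a y z \<Longrightarrow> typed n a' y z \<Longrightarrow> typed n b x y \<Longrightarrow>
    eqv n \<zeta> (Comp (Add a a') b) (Add (Comp a b) (Comp a' b)) x z"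
| e_comp_add_r: "typed n a y z \<Longrightarrow> typed n b x y \<Longrightarrow> typed n b' x y \<Longrightarrow>
    eqv n \<zeta> (Comp a (Add b b')) (Add (Comp a b) (Comp a b')) x z"
| e_comp_scal_l: "typed n a y z \<Longrightarrow> typed n b x y \<Longrightarrow>
    eqv n \<zeta> (Comp (Scal c a) b) (Scal c (Comp a b)) x z"
| e_comp_scal_r: "typed n a y z \<Longrightarrow> typed n b x y \<Longrightarrow>
    eqv n \<zeta> (Comp a (Scal c b)) (Scal c (Comp a b)) x z"
| e_tens_add_l: "typed n a x y \<Longrightarrow> typed n a' x y \<Longrightarrow> typed n b x' y' \<Longrightarrow>
    eqv n \<zeta> (Tens (Add a a') b) (Add (Tens a b) (Tens a' b)) (x + x') (y + y')"
| e_tens_add_r: "typed n a x y \<Longrightarrow> typed n b x' y' \<Longrightarrow> typed n b' x' y' \<Longrightarrow>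
    eqv n \<zeta> (Tens a (Add b b')) (Add (Tens a b) (Tens a b')) (x + x') (y + y')"
| e_tens_scal_l: "typed n a x y \<Longrightarrow> typed n b x' y' \<Longrightarrow>
    eqv n \<zeta> (Tens (Scal c a) b) (Scal c (Tens a b)) (x + x') (y + y')"
| e_tens_scal_r: "typed n a x y \<Longrightarrow> typed n b x' y' \<Longrightarrow>
    eqv n \<zeta> (Tens a (Scal c b)) (Scal c (Tens a b)) (x + x') (y + y')"
  (* defining relations of D_{\<zeta>,n} *)
| e_fg: "eqv n \<zeta> (Comp F G) (Id 0) 0 0"
| e_gf: "eqv n \<zeta> (Comp G F) (Id n) n n"
| e_twist: "eqv n \<zeta> (Tens (Id 1) F) (Scal \<zeta> (Tens F (Id 1))) (n + 1) 1"

fun fpow :: "nat \<Rightarrow> 'k mexp" where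
  "fpow 0 = Id 0"
| "fpow (Suc l) = Tens F (fpow l)"

end

theory Submission
  imports Defs
begin

lemma ty_tens': "typed n a x y \<Longrightarrow> typed n b x' y' \<Longrightarrow> X = x + x' \<Longrightarrow> Y = y + y' \<Longrightarrow> typed n (Tens a b) X Y"
  using typed.ty_tens by blast

lemma eqv_typed: "eqv n z a b x y \<Longrightarrow> typed n a x y \<and> typed n b x y"
proof (induction rule: eqv.induct)
  case (e_tens_assoc a x y b x' y' c x'' y'')
  then show ?case
    by (metis add.assoc typed.ty_tens)
next
  case (e_unit_l a x y)
  then show ?case by (metis add_0 typed.ty_id typed.ty_tens)
next
  case (e_unit_r a x y)
  then show ?case by (metis add_0_right typed.ty_id typed.ty_tens)
next
  case (e_twist)
  then show ?case by (metis add.commute add_0_right typed.ty_F typed.ty_id typed.ty_tens typed.ty_scal)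
qed (auto intro: typed.intros)

lemma divmod_add:
  assumes "0 < (n::nat)"
  shows "(x+x') div n = x div n + x' div n + (if x mod n + x' mod n < n then 0 else 1) \<and>
         (x+x') mod n = (if x mod n + x' mod n < n then x mod n + x' mod n else x mod n + x' mod n - n)"
proof -
  define a where "a = x div n"
  define b where "b = x' div n"
  define r where "r = x mod n"
  define r' where "r' = x' mod n"
  have rl: "r < n" "r' < n" using assms by (auto simp: r_def r'_def)
  have xx: "x + x' = (a + b) * n + (r + r')" by (simp add: a_def b_def r_def r'_def algebra_simps)
  show ?thesis
  proof (cases "r + r' < n")
    case True
    have "(x+x') div n = a + b" "(x+x') mod n = r + r'" unfolding xx using True assms by simp_all
    then show ?thesis using True by (simp add: a_def b_def r_def r'_def)
  next
    case False
    define s where "s = r + r' - n"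
    have sl: "s < n" using rl False by (simp add: s_def)
    have xx2: "x + x' = s + (a + b + 1) * n" using xx False by (simp add: s_def algebra_simps)
    have "(x+x') div n = a + b + 1" "(x+x') mod n = s"
    proof -
      have "(s + (a + b + 1) * n) div n = (a + b + 1) + s div n" by (rule div_mult_self1) (use assms in simp)
      then show "(x+x') div n = a + b + 1" using sl unfolding xx2 by simp
      have "(s + (a + b + 1) * n) mod n = s mod n" by (rule mod_mult_self1)
      then show "(x+x') mod n = s" using sl unfolding xx2 by simp
    qed
    then have "(x+x') div n = a + b + 1" "(x+x') mod n = r + r' - n" by (simp_all add: s_def)
    then show ?thesis using False by (simp add: a_def b_def r_def r'_def)
  qed
qed

definition EQ :: "nat \<Rightarrow> 'k::field \<Rightarrow> nat \<Rightarrow> nat \<Rightarrow> 'k mexp \<Rightarrow> 'k mexp \<Rightarrow> bool" where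
  "EQ n z x y a b \<longleftrightarrow> eqv n z a b x y"

fun xpow :: "'k mexp \<Rightarrow> nat \<Rightarrow> 'k mexp" where
  "xpow X 0 = Id 0"
| "xpow X (Suc a) = Tens X (xpow X a)"

lemma fpow_xpow: "fpow l = xpow F l"
  by (induction l) auto

locale L =
  fixes n :: nat and z :: "'k::field"
begin

abbreviation Q :: "nat \<Rightarrow> nat \<Rightarrow> 'k mexp \<Rightarrow> 'k mexp \<Rightarrow> bool" where
  "Q x y a b \<equiv> EQ n z x y a b"

abbreviation T :: "'k mexp \<Rightarrow> nat \<Rightarrow> nat \<Rightarrow> bool" where
  "T a x y \<equiv> typed n a x y"

lemma q_typed: "Q x y a b \<Longrightarrow> T a x y \<and> T b x y"
  unfolding EQ_def using eqv_typed by blast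

lemma q_trans[trans]: "Q x y a b \<Longrightarrow> Q x y b c \<Longrightarrow> Q x y a c"
  unfolding EQ_def by (rule eqv.e_trans)

lemma q_sym: "Q x y a b \<Longrightarrow> Q x y b a"
  unfolding EQ_def by (rule eqv.e_sym)

lemma q_refl: "T a x y \<Longrightarrow> Q x y a a"
  unfolding EQ_def by (rule eqv.e_refl)

lemma q_ty: "Q x y a b \<Longrightarrow> x = x' \<Longrightarrow> y = y' \<Longrightarrow> Q x' y' a b"
  by simp

lemma q_comp: "Q y w a a' \<Longrightarrow> Q x y b b' \<Longrightarrow> Q x w (Comp a b) (Comp a' b')"
  unfolding EQ_def by (rule eqv.e_comp)

lemma q_tens: "Q x y a a' \<Longrightarrow> Q x' y' b b' \<Longrightarrow> X = x + x' \<Longrightarrow> Y = y + y' \<Longrightarrow> Q X Y (Tens a b) (Tens a' b')"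
  unfolding EQ_def using eqv.e_tens by blast

lemma q_scal: "Q x y a a' \<Longrightarrow> Q x y (Scal c a) (Scal c a')"
  unfolding EQ_def by (rule eqv.e_scal)

lemma q_add: "Q x y a a' \<Longrightarrow> Q x y b b' \<Longrightarrow> Q x y (Add a b) (Add a' b')"
  unfolding EQ_def by (rule eqv.e_add)

lemma q_comp_assoc: "T c w x \<Longrightarrow> T b x y \<Longrightarrow> T a y u \<Longrightarrow> Q w u (Comp (Comp a b) c) (Comp a (Comp b c))"
  unfolding EQ_def by (rule eqv.e_comp_assoc)

lemma q_id_l: "T a x y \<Longrightarrow> Q x y (Comp (Id y) a) a"
  unfolding EQ_def by (rule eqv.e_id_l)

lemma q_id_r: "T a x y \<Longrightarrow> Q x y (Comp a (Id x)) a"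
  unfolding EQ_def by (rule eqv.e_id_r)

lemma q_tens_assoc: "T a x y \<Longrightarrow> T b x' y' \<Longrightarrow> T c x'' y'' \<Longrightarrow> X = x + x' + x'' \<Longrightarrow> Y = y + y' + y''
  \<Longrightarrow> Q X Y (Tens (Tens a b) c) (Tens a (Tens b c))"
  unfolding EQ_def using eqv.e_tens_assoc by blast

lemma q_unit_l: "T a x y \<Longrightarrow> Q x y (Tens (Id 0) a) a"
  unfolding EQ_def by (rule eqv.e_unit_l)

lemma q_unit_r: "T a x y \<Longrightarrow> Q x y (Tens a (Id 0)) a"
  unfolding EQ_def by (rule eqv.e_unit_r)

lemma q_id_tens: "X = m + m' \<Longrightarrow> Q X X (Tens (Id m) (Id m')) (Id X)"
  unfolding EQ_def using eqv.e_id_tens by blast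

lemma q_inter: "T a y u \<Longrightarrow> T b x y \<Longrightarrow> T c y' u' \<Longrightarrow> T d x' y' \<Longrightarrow> X = x + x' \<Longrightarrow> U = u + u'
  \<Longrightarrow> Q X U (Comp (Tens a c) (Tens b d)) (Tens (Comp a b) (Comp c d))"
  unfolding EQ_def using eqv.e_interchange by blast

lemma q_scal_one: "T a x y \<Longrightarrow> Q x y (Scal 1 a) a"
  unfolding EQ_def by (rule eqv.e_scal_one)

lemma q_scal_scal: "T a x y \<Longrightarrow> Q x y (Scal c (Scal d a)) (Scal (c * d) a)"
  unfolding EQ_def by (rule eqv.e_scal_scal)

lemma q_add_scal: "T a x y \<Longrightarrow> Q x y (Scal (c + d) a) (Add (Scal c a) (Scal d a))"
  unfolding EQ_def by (rule eqv.e_add_scal)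

lemma q_add_inv: "T a x y \<Longrightarrow> Q x y (Add a (Scal (-1) a)) (Zero x y)"
  unfolding EQ_def by (rule eqv.e_add_inv)

lemma q_comp_scal_l: "T a y u \<Longrightarrow> T b x y \<Longrightarrow> Q x u (Comp (Scal c a) b) (Scal c (Comp a b))"
  unfolding EQ_def by (rule eqv.e_comp_scal_l)

lemma q_comp_scal_r: "T a y u \<Longrightarrow> T b x y \<Longrightarrow> Q x u (Comp a (Scal c b)) (Scal c (Comp a b))"
  unfolding EQ_def by (rule eqv.e_comp_scal_r)

lemma q_tens_scal_l: "T a x y \<Longrightarrow> T b x' y' \<Longrightarrow> X = x + x' \<Longrightarrow> Y = y + y' \<Longrightarrow> Q X Y (Tens (Scal c a) b) (Scal c (Tens a b))"
  unfolding EQ_def using eqv.e_tens_scal_l by blast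

lemma q_tens_scal_r: "T a x y \<Longrightarrow> T b x' y' \<Longrightarrow> X = x + x' \<Longrightarrow> Y = y + y' \<Longrightarrow> Q X Y (Tens a (Scal c b)) (Scal c (Tens a b))"
  unfolding EQ_def using eqv.e_tens_scal_r by blast

lemma q_fg: "Q 0 0 (Comp F G) (Id 0)"
  unfolding EQ_def by (rule eqv.e_fg)

lemma q_gf: "Q n n (Comp G F) (Id n)"
  unfolding EQ_def by (rule eqv.e_gf)

lemma q_twist: "Q (1 + n) (1 + 0) (Tens (Id 1) F) (Scal z (Tens F (Id 1)))"
  unfolding EQ_def using eqv.e_twist[of n z] by (simp add: add.commute)

lemma T_tens: "T a x y \<Longrightarrow> T b x' y' \<Longrightarrow> X = x + x' \<Longrightarrow> Y = y + y' \<Longrightarrow> T (Tens a b) X Y"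
  using typed.ty_tens by blast

lemma T_xpow: "T X p q \<Longrightarrow> T (xpow X a) (a * p) (a * q)"
  by (induction a) (auto intro!: T_tens typed.intros)

lemma q_scal0: "T a x y \<Longrightarrow> Q x y (Scal 0 a) (Zero x y)"
proof -
  assume a: "T a x y"
  have "Q x y (Scal 0 a) (Scal (1 + -1) a)" using a by (simp add: q_refl typed.ty_scal)
  also have "Q x y ... (Add (Scal 1 a) (Scal (-1) a))" by (rule q_add_scal[OF a])
  also have "Q x y ... (Add a (Scal (-1) a))"
    by (rule q_add[OF q_scal_one[OF a] q_refl]) (simp add: a typed.ty_scal)
  also have "Q x y ... (Zero x y)" by (rule q_add_inv[OF a])
  finally show ?thesis .
qed

lemma q_kill: "T a x y \<Longrightarrow> T b x y \<Longrightarrow> Q x y (Scal 0 a) (Scal 0 b)"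
  by (meson q_scal0 q_sym q_trans)

lemma q_scal_cong: "Q x y a (Scal c b) \<Longrightarrow> Q x y (Scal d a) (Scal (d * c) b)"
proof -
  assume h: "Q x y a (Scal c b)"
  then have "T (Scal c b) x y" using q_typed by blast
  then have tb: "T b x y" by (cases rule: typed.cases) auto
  show ?thesis using q_trans[OF q_scal[OF h] q_scal_scal[OF tb]] .
qed


lemma TF: "T (xpow F a) (a * n) 0" using T_xpow[OF typed.ty_F, of a] by simp
lemma TG: "T (xpow G a) 0 (a * n)" using T_xpow[OF typed.ty_G, of a] by simp

lemma L_fg: "Q 0 0 (Comp (xpow F a) (xpow G a)) (Id 0)"
proof (induction a)
  case 0
  show ?case by (simp add: q_id_l typed.ty_id)
next
  case (Suc a)
  have "Q 0 0 (Comp (xpow F (Suc a)) (xpow G (Suc a))) (Tens (Comp F G) (Comp (xpow F a) (xpow G a)))"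
    by simp (rule q_inter[OF typed.ty_F typed.ty_G TF TG]; simp)
  also have "Q 0 0 ... (Tens (Id 0) (Id 0))"
    by (rule q_tens[OF q_fg Suc]; simp)
  also have "Q 0 0 ... (Id 0)" by (rule q_id_tens; simp)
  finally show ?case .
qed

lemma L_gf: "Q (a * n) (a * n) (Comp (xpow G a) (xpow F a)) (Id (a * n))"
proof (induction a)
  case 0
  show ?case by (simp add: q_id_l typed.ty_id)
next
  case (Suc a)
  have "Q (Suc a * n) (Suc a * n) (Comp (xpow G (Suc a)) (xpow F (Suc a))) (Tens (Comp G F) (Comp (xpow G a) (xpow F a)))"
    by simp (rule q_inter[OF typed.ty_G typed.ty_F TG TF]; simp)
  also have "Q (Suc a * n) (Suc a * n) ... (Tens (Id n) (Id (a * n)))"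
    by (rule q_tens[OF q_gf Suc]; simp)
  also have "Q (Suc a * n) (Suc a * n) ... (Id (Suc a * n))" by (rule q_id_tens; simp)
  finally show ?case .
qed

lemma xpow_add: "T X p q \<Longrightarrow> Q ((a + b) * p) ((a + b) * q) (Tens (xpow X a) (xpow X b)) (xpow X (a + b))"
proof (induction a)
  case 0
  then show ?case using q_unit_l[OF T_xpow[OF 0, of b]] by simp
next
  case (Suc a)
  have "Q ((Suc a + b) * p) ((Suc a + b) * q) (Tens (xpow X (Suc a)) (xpow X b)) (Tens X (Tens (xpow X a) (xpow X b)))"
    by simp (rule q_tens_assoc[OF Suc(2) T_xpow[OF Suc(2)] T_xpow[OF Suc(2)]]; simp add: algebra_simps)
  also have "Q ((Suc a + b) * p) ((Suc a + b) * q) ... (Tens X (xpow X (a + b)))"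
    by (rule q_tens[OF q_refl[OF Suc(2)] Suc(1)[OF Suc(2)]]; simp)
  finally show ?case by simp
qed

lemma comm1:
  assumes tX: "T X p q" and tw: "\<exists>k. Q (1 + p) (1 + q) (Tens (Id 1) X) (Scal k (Tens X (Id 1)))"
  shows "\<exists>k. Q (m + p) (m + q) (Tens (Id m) X) (Scal k (Tens X (Id m)))"
proof (induction m)
  case 0
  have "Q p q (Tens (Id 0) X) X" by (rule q_unit_l[OF tX])
  also have "Q p q X (Tens X (Id 0))" by (rule q_sym[OF q_unit_r[OF tX]])
  also have "Q p q ... (Scal 1 (Tens X (Id 0)))"
    by (rule q_sym[OF q_scal_one]) (rule T_tens[OF tX typed.ty_id]; simp)
  finally show ?case by auto
next
  case (Suc m)
  obtain k where k: "Q (m + p) (m + q) (Tens (Id m) X) (Scal k (Tens X (Id m)))" using Suc by blast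
  obtain k1 where k1: "Q (1 + p) (1 + q) (Tens (Id 1) X) (Scal k1 (Tens X (Id 1)))" using tw by blast
  have tXm: "T (Tens X (Id m)) (p + m) (q + m)" by (rule T_tens[OF tX typed.ty_id]; simp)
  have tX1: "T (Tens X (Id 1)) (p + 1) (q + 1)" by (rule T_tens[OF tX typed.ty_id]; simp)
  have "Q (Suc m + p) (Suc m + q) (Tens (Id (Suc m)) X) (Tens (Tens (Id 1) (Id m)) X)"
    by (rule q_tens[OF q_sym[OF q_id_tens] q_refl[OF tX]]; simp)
  also have "Q (Suc m + p) (Suc m + q) ... (Tens (Id 1) (Tens (Id m) X))"
    by (rule q_tens_assoc[OF typed.ty_id typed.ty_id tX]; simp)
  also have "Q (Suc m + p) (Suc m + q) ... (Tens (Id 1) (Scal k (Tens X (Id m))))"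
    by (rule q_tens[OF q_refl[OF typed.ty_id] k]; simp)
  also have "Q (Suc m + p) (Suc m + q) ... (Scal k (Tens (Id 1) (Tens X (Id m))))"
    by (rule q_tens_scal_r[OF typed.ty_id tXm]; simp)
  also have "Q (Suc m + p) (Suc m + q) ... (Scal k (Tens (Tens (Id 1) X) (Id m)))"
    by (rule q_scal, rule q_sym, rule q_tens_assoc[OF typed.ty_id tX typed.ty_id]; simp)
  also have "Q (Suc m + p) (Suc m + q) ... (Scal k (Tens (Scal k1 (Tens X (Id 1))) (Id m)))"
    by (rule q_scal, rule q_tens[OF k1 q_refl[OF typed.ty_id]]; simp)
  also have "Q (Suc m + p) (Suc m + q) ... (Scal k (Scal k1 (Tens (Tens X (Id 1)) (Id m))))"
    by (rule q_scal, rule q_tens_scal_l[OF tX1 typed.ty_id]; simp)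
  also have "Q (Suc m + p) (Suc m + q) ... (Scal k (Scal k1 (Tens X (Tens (Id 1) (Id m)))))"
    by (rule q_scal, rule q_scal, rule q_tens_assoc[OF tX typed.ty_id typed.ty_id]; simp)
  also have "Q (Suc m + p) (Suc m + q) ... (Scal k (Scal k1 (Tens X (Id (Suc m)))))"
    by (rule q_scal, rule q_scal, rule q_tens[OF q_refl[OF tX] q_id_tens]; simp)
  also have "Q (Suc m + p) (Suc m + q) ... (Scal (k * k1) (Tens X (Id (Suc m))))"
    by (rule q_scal_scal, rule T_tens[OF tX typed.ty_id]; simp)
  finally show ?case by blast
qed


lemma comm_pow:
  assumes tX: "T X p q" and cm: "\<exists>k. Q (m + p) (m + q) (Tens (Id m) X) (Scal k (Tens X (Id m)))"
  shows "\<exists>k. Q (m + a * p) (m + a * q) (Tens (Id m) (xpow X a)) (Scal k (Tens (xpow X a) (Id m)))"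
proof (induction a)
  case 0
  have "Q m m (Tens (Id m) (Id 0)) (Id m)" by (rule q_id_tens; simp)
  also have "Q m m ... (Tens (Id 0) (Id m))" by (rule q_sym, rule q_id_tens; simp)
  also have "Q m m ... (Scal 1 (Tens (Id 0) (Id m)))"
    by (rule q_sym, rule q_scal_one, rule T_tens[OF typed.ty_id typed.ty_id]; simp)
  finally show ?case by auto
next
  case (Suc a)
  obtain k2 where k2: "Q (m + a * p) (m + a * q) (Tens (Id m) (xpow X a)) (Scal k2 (Tens (xpow X a) (Id m)))" using Suc by blast
  obtain k1 where k1: "Q (m + p) (m + q) (Tens (Id m) X) (Scal k1 (Tens X (Id m)))" using cm by blast
  note tP = T_xpow[OF tX, of a]
  have tXm: "T (Tens X (Id m)) (p + m) (q + m)" by (rule T_tens[OF tX typed.ty_id]; simp)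
  have tPm: "T (Tens (xpow X a) (Id m)) (a * p + m) (a * q + m)" by (rule T_tens[OF tP typed.ty_id]; simp)
  have "Q (m + Suc a * p) (m + Suc a * q) (Tens (Id m) (xpow X (Suc a))) (Tens (Tens (Id m) X) (xpow X a))"
    by simp (rule q_sym, rule q_tens_assoc[OF typed.ty_id tX tP]; simp)
  also have "Q (m + Suc a * p) (m + Suc a * q) ... (Tens (Scal k1 (Tens X (Id m))) (xpow X a))"
    by (rule q_tens[OF k1 q_refl[OF tP]]; simp)
  also have "Q (m + Suc a * p) (m + Suc a * q) ... (Scal k1 (Tens (Tens X (Id m)) (xpow X a)))"
    by (rule q_tens_scal_l[OF tXm tP]; simp)
  also have "Q (m + Suc a * p) (m + Suc a * q) ... (Scal k1 (Tens X (Tens (Id m) (xpow X a))))"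
    by (rule q_scal, rule q_tens_assoc[OF tX typed.ty_id tP]; simp)
  also have "Q (m + Suc a * p) (m + Suc a * q) ... (Scal k1 (Tens X (Scal k2 (Tens (xpow X a) (Id m)))))"
    by (rule q_scal, rule q_tens[OF q_refl[OF tX] k2]; simp)
  also have "Q (m + Suc a * p) (m + Suc a * q) ... (Scal k1 (Scal k2 (Tens X (Tens (xpow X a) (Id m)))))"
    by (rule q_scal, rule q_tens_scal_r[OF tX tPm]; simp)
  also have "Q (m + Suc a * p) (m + Suc a * q) ... (Scal k1 (Scal k2 (Tens (Tens X (xpow X a)) (Id m))))"
    by (rule q_scal, rule q_scal, rule q_sym, rule q_tens_assoc[OF tX tP typed.ty_id]; simp)
  also have "Q (m + Suc a * p) (m + Suc a * q) ... (Scal (k1 * k2) (Tens (xpow X (Suc a)) (Id m)))"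
    by simp (rule q_scal_scal, rule T_tens[OF T_tens[OF tX tP] typed.ty_id]; simp)
  finally show ?case by blast
qed

lemma twistG: "\<exists>k. Q (1 + 0) (1 + n) (Tens (Id 1) G) (Scal k (Tens G (Id 1)))"
proof -
  have tA: "T (Tens (Id 1) G) 1 (1 + n)" by (rule T_tens[OF typed.ty_id typed.ty_G]; simp)
  have tB: "T (Tens G (Id 1)) 1 (1 + n)" by (rule T_tens[OF typed.ty_G typed.ty_id]; simp)
  have tFr: "T (Tens F (Id 1)) (1 + n) 1" by (rule T_tens[OF typed.ty_F typed.ty_id]; simp)
  have tFl: "T (Tens (Id 1) F) (1 + n) 1" by (rule T_tens[OF typed.ty_id typed.ty_F]; simp)
  have tw: "Q (1 + n) 1 (Tens (Id 1) F) (Scal z (Tens F (Id 1)))" using q_twist by simp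
  have FlA: "Q 1 1 (Comp (Tens (Id 1) F) (Tens (Id 1) G)) (Id 1)"
  proof -
    have "Q 1 1 (Comp (Tens (Id 1) F) (Tens (Id 1) G)) (Tens (Comp (Id 1) (Id 1)) (Comp F G))"
      by (rule q_inter[OF typed.ty_id typed.ty_id typed.ty_F typed.ty_G]; simp)
    also have "Q 1 1 ... (Tens (Id 1) (Id 0))"
      by (rule q_tens[OF q_id_l[OF typed.ty_id] q_fg]; simp)
    also have "Q 1 1 ... (Id 1)" by (rule q_id_tens; simp)
    finally show ?thesis .
  qed
  show ?thesis
  proof (cases "z = 0")
    case True
    have "Q 1 1 (Id 1) (Comp (Tens (Id 1) F) (Tens (Id 1) G))" by (rule q_sym[OF FlA])
    also have "Q 1 1 ... (Comp (Scal 0 (Tens F (Id 1))) (Tens (Id 1) G))"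
      by (rule q_comp[OF _ q_refl[OF tA]]) (use tw True in simp)
    also have "Q 1 1 ... (Scal 0 (Comp (Tens F (Id 1)) (Tens (Id 1) G)))"
      by (rule q_comp_scal_l[OF tFr tA])
    finally have I0: "Q 1 1 (Id 1) (Scal 0 (Comp (Tens F (Id 1)) (Tens (Id 1) G)))" .
    have tW: "T (Comp (Tens F (Id 1)) (Tens (Id 1) G)) 1 1" by (rule typed.ty_comp[OF tFr tA])
    have "Q 1 (1 + n) (Tens (Id 1) G) (Comp (Tens (Id 1) G) (Id 1))" by (rule q_sym[OF q_id_r[OF tA]])
    also have "Q 1 (1 + n) ... (Comp (Tens (Id 1) G) (Scal 0 (Comp (Tens F (Id 1)) (Tens (Id 1) G))))"
      by (rule q_comp[OF q_refl[OF tA] I0])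
    also have "Q 1 (1 + n) ... (Scal 0 (Comp (Tens (Id 1) G) (Comp (Tens F (Id 1)) (Tens (Id 1) G))))"
      by (rule q_comp_scal_r[OF tA tW])
    also have "Q 1 (1 + n) ... (Scal 0 (Tens G (Id 1)))"
      by (rule q_kill[OF typed.ty_comp[OF tA tW] tB])
    finally show ?thesis by auto
  next
    case False
    have Fr: "Q (1 + n) 1 (Tens F (Id 1)) (Scal (inverse z) (Tens (Id 1) F))"
    proof -
      have "Q (1 + n) 1 (Scal (inverse z) (Tens (Id 1) F)) (Scal (inverse z) (Scal z (Tens F (Id 1))))"
        by (rule q_scal[OF tw])
      also have "Q (1 + n) 1 ... (Scal (inverse z * z) (Tens F (Id 1)))" by (rule q_scal_scal[OF tFr])
      also have "Q (1 + n) 1 ... (Tens F (Id 1))" using q_scal_one[OF tFr] False by simp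
      finally show ?thesis by (rule q_sym)
    qed
    have Id1n: "Q (1 + n) (1 + n) (Id (1 + n)) (Comp (Tens G (Id 1)) (Tens F (Id 1)))"
    proof -
      have "Q (1 + n) (1 + n) (Id (1 + n)) (Tens (Id n) (Id 1))" by (rule q_sym, rule q_id_tens; simp)
      also have "Q (1 + n) (1 + n) ... (Tens (Comp G F) (Comp (Id 1) (Id 1)))"
        by (rule q_tens[OF q_sym[OF q_gf] q_sym[OF q_id_l[OF typed.ty_id]]]; simp)
      also have "Q (1 + n) (1 + n) ... (Comp (Tens G (Id 1)) (Tens F (Id 1)))"
        by (rule q_sym, rule q_inter[OF typed.ty_G typed.ty_F typed.ty_id typed.ty_id]; simp)
      finally show ?thesis .
    qed
    have "Q 1 (1 + n) (Tens (Id 1) G) (Comp (Id (1 + n)) (Tens (Id 1) G))" by (rule q_sym[OF q_id_l[OF tA]])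
    also have "Q 1 (1 + n) ... (Comp (Comp (Tens G (Id 1)) (Tens F (Id 1))) (Tens (Id 1) G))"
      by (rule q_comp[OF Id1n q_refl[OF tA]])
    also have "Q 1 (1 + n) ... (Comp (Tens G (Id 1)) (Comp (Tens F (Id 1)) (Tens (Id 1) G)))"
      by (rule q_comp_assoc[OF tA tFr tB])
    also have "Q 1 (1 + n) ... (Comp (Tens G (Id 1)) (Comp (Scal (inverse z) (Tens (Id 1) F)) (Tens (Id 1) G)))"
      by (rule q_comp[OF q_refl[OF tB] q_comp[OF Fr q_refl[OF tA]]])
    also have "Q 1 (1 + n) ... (Comp (Tens G (Id 1)) (Scal (inverse z) (Comp (Tens (Id 1) F) (Tens (Id 1) G))))"
      by (rule q_comp[OF q_refl[OF tB] q_comp_scal_l[OF tFl tA]])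
    also have "Q 1 (1 + n) ... (Comp (Tens G (Id 1)) (Scal (inverse z) (Id 1)))"
      by (rule q_comp[OF q_refl[OF tB] q_scal[OF FlA]])
    also have "Q 1 (1 + n) ... (Scal (inverse z) (Comp (Tens G (Id 1)) (Id 1)))"
      by (rule q_comp_scal_r[OF tB typed.ty_id])
    also have "Q 1 (1 + n) ... (Scal (inverse z) (Tens G (Id 1)))"
      by (rule q_scal[OF q_id_r[OF tB]])
    finally show ?thesis by auto
  qed
qed

lemma commF: "\<exists>k. Q (m + a * n) m (Tens (Id m) (xpow F a)) (Scal k (Tens (xpow F a) (Id m)))"
proof -
  have "\<exists>k. Q (m + n) (m + 0) (Tens (Id m) F) (Scal k (Tens F (Id m)))"
    by (rule comm1[OF typed.ty_F]) (use q_twist in blast)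
  from comm_pow[OF typed.ty_F this, of a] show ?thesis by simp
qed

lemma commG: "\<exists>k. Q m (m + a * n) (Tens (Id m) (xpow G a)) (Scal k (Tens (xpow G a) (Id m)))"
proof -
  have "\<exists>k. Q (m + 0) (m + n) (Tens (Id m) G) (Scal k (Tens G (Id m)))"
    by (rule comm1[OF typed.ty_G]) (use twistG in blast)
  from comm_pow[OF typed.ty_G this, of a] show ?thesis by simp
qed


lemma merge:
  assumes tX: "T X p q"
    and cm: "\<exists>k. Q (r + b * p) (r + b * q) (Tens (Id r) (xpow X b)) (Scal k (Tens (xpow X b) (Id r)))"
  shows "\<exists>k. Q ((a * p + r) + (b * p + r')) ((a * q + r) + (b * q + r'))
     (Tens (Tens (xpow X a) (Id r)) (Tens (xpow X b) (Id r'))) (Scal k (Tens (xpow X (a + b)) (Id (r + r'))))"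
proof -
  obtain k where k: "Q (r + b * p) (r + b * q) (Tens (Id r) (xpow X b)) (Scal k (Tens (xpow X b) (Id r)))"
    using cm by blast
  note ta = T_xpow[OF tX, of a] and tb = T_xpow[OF tX, of b]
  have tbr: "T (Tens (xpow X b) (Id r)) (b * p + r) (b * q + r)" by (rule T_tens[OF tb typed.ty_id]; simp)
  have tbr2: "T (Tens (Tens (xpow X b) (Id r)) (Id r')) (b * p + r + r') (b * q + r + r')"
    by (rule T_tens[OF tbr typed.ty_id]; simp)
  have tbr': "T (Tens (xpow X b) (Id r')) (b * p + r') (b * q + r')" by (rule T_tens[OF tb typed.ty_id]; simp)
  let ?P = "(a * p + r) + (b * p + r')" and ?R = "(a * q + r) + (b * q + r')"
  have "Q ?P ?R (Tens (Tens (xpow X a) (Id r)) (Tens (xpow X b) (Id r'))) (Tens (xpow X a) (Tens (Id r) (Tens (xpow X b) (Id r'))))"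
    by (rule q_tens_assoc[OF ta typed.ty_id tbr']; simp)
  also have "Q ?P ?R ... (Tens (xpow X a) (Tens (Tens (Id r) (xpow X b)) (Id r')))"
    by (rule q_tens[OF q_refl[OF ta] q_sym[OF q_tens_assoc[OF typed.ty_id tb typed.ty_id]]]; simp)
  also have "Q ?P ?R ... (Tens (xpow X a) (Tens (Scal k (Tens (xpow X b) (Id r))) (Id r')))"
    by (rule q_tens[OF q_refl[OF ta] q_tens[OF k q_refl[OF typed.ty_id]]]; simp)
  also have "Q ?P ?R ... (Tens (xpow X a) (Scal k (Tens (Tens (xpow X b) (Id r)) (Id r'))))"
    by (rule q_tens[OF q_refl[OF ta] q_tens_scal_l[OF tbr typed.ty_id]]; simp)
  also have "Q ?P ?R ... (Scal k (Tens (xpow X a) (Tens (Tens (xpow X b) (Id r)) (Id r'))))"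
    by (rule q_tens_scal_r[OF ta tbr2]; simp)
  also have "Q ?P ?R ... (Scal k (Tens (xpow X a) (Tens (xpow X b) (Tens (Id r) (Id r')))))"
    by (rule q_scal, rule q_tens[OF q_refl[OF ta] q_tens_assoc[OF tb typed.ty_id typed.ty_id]]; simp)
  also have "Q ?P ?R ... (Scal k (Tens (xpow X a) (Tens (xpow X b) (Id (r + r')))))"
    by (rule q_scal, rule q_tens[OF q_refl[OF ta] q_tens[OF q_refl[OF tb] q_id_tens]]; simp)
  also have "Q ?P ?R ... (Scal k (Tens (Tens (xpow X a) (xpow X b)) (Id (r + r'))))"
    by (rule q_scal, rule q_sym, rule q_tens_assoc[OF ta tb typed.ty_id]; simp)
  also have "Q ?P ?R ... (Scal k (Tens (xpow X (a + b)) (Id (r + r'))))"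
    by (rule q_scal, rule q_tens[OF xpow_add[OF tX] q_refl[OF typed.ty_id]]; simp add: algebra_simps)
  finally show ?thesis by blast
qed

definition down :: "nat \<Rightarrow> 'k mexp" where
  "down m = Tens (xpow F (m div n)) (Id (m mod n))"

definition up :: "nat \<Rightarrow> 'k mexp" where
  "up m = Tens (xpow G (m div n)) (Id (m mod n))"

lemma T_down: "T (down m) m (m mod n)"
  unfolding down_def by (rule T_tens[OF TF typed.ty_id]; simp)

lemma T_up: "T (up m) (m mod n) m"
  unfolding up_def by (rule T_tens[OF TG typed.ty_id]; simp)

lemma K1: "Q (m mod n) (m mod n) (Comp (down m) (up m)) (Id (m mod n))"
proof -
  have "Q (m mod n) (m mod n) (Comp (down m) (up m))
     (Tens (Comp (xpow F (m div n)) (xpow G (m div n))) (Comp (Id (m mod n)) (Id (m mod n))))"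
    unfolding down_def up_def by (rule q_inter[OF TF TG typed.ty_id typed.ty_id]; simp)
  also have "Q (m mod n) (m mod n) ... (Tens (Id 0) (Id (m mod n)))"
    by (rule q_tens[OF L_fg q_id_l[OF typed.ty_id]]; simp)
  also have "Q (m mod n) (m mod n) ... (Id (m mod n))" by (rule q_id_tens; simp)
  finally show ?thesis .
qed

lemma K2: "Q m m (Comp (up m) (down m)) (Id m)"
proof -
  have "Q m m (Comp (up m) (down m))
     (Tens (Comp (xpow G (m div n)) (xpow F (m div n))) (Comp (Id (m mod n)) (Id (m mod n))))"
    unfolding down_def up_def by (rule q_inter[OF TG TF typed.ty_id typed.ty_id]; simp)
  also have "Q m m ... (Tens (Id (m div n * n)) (Id (m mod n)))"
    by (rule q_tens[OF L_gf q_id_l[OF typed.ty_id]]; simp)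
  also have "Q m m ... (Id m)" by (rule q_id_tens; simp)
  finally show ?thesis .
qed


lemma stepF: "Q (A * n + (n + s)) (n + s) (Tens (xpow F A) (Id (n + s)))
   (Comp (Tens G (Id s)) (Tens (xpow F (Suc A)) (Id s)))"
proof -
  note tA = TF[of A]
  have tA1: "T (xpow F (Suc A)) (Suc A * n) 0" by (rule TF)
  have "Q (A * n + n) n (Tens (xpow F A) (Id n)) (Tens (Comp (Id 0) (xpow F A)) (Comp G F))"
    by (rule q_tens[OF q_sym[OF q_id_l[OF tA]] q_sym[OF q_gf]]; simp)
  also have "Q (A * n + n) n ... (Comp (Tens (Id 0) G) (Tens (xpow F A) F))"
    by (rule q_sym, rule q_inter[OF typed.ty_id tA typed.ty_G typed.ty_F]; simp)
  also have "Q (A * n + n) n ... (Comp G (xpow F (Suc A)))"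
  proof (rule q_comp)
    show "Q 0 n (Tens (Id 0) G) G" by (rule q_unit_l[OF typed.ty_G])
    have "Q (A * n + n) 0 (Tens (xpow F A) F) (Tens (xpow F A) (xpow F 1))"
      by (simp, rule q_tens[OF q_refl[OF tA] q_sym[OF q_unit_r[OF typed.ty_F]]]; simp)
    also have "Q (A * n + n) 0 ... (xpow F (A + 1))" using xpow_add[OF typed.ty_F, of A 1] by (simp add: algebra_simps)
    finally show "Q (A * n + n) 0 (Tens (xpow F A) F) (xpow F (Suc A))" by simp
  qed
  finally have H: "Q (A * n + n) n (Tens (xpow F A) (Id n)) (Comp G (xpow F (Suc A)))" .
  have "Q (A * n + (n + s)) (n + s) (Tens (xpow F A) (Id (n + s))) (Tens (xpow F A) (Tens (Id n) (Id s)))"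
    by (rule q_tens[OF q_refl[OF tA] q_sym[OF q_id_tens]]; simp)
  also have "Q (A * n + (n + s)) (n + s) ... (Tens (Tens (xpow F A) (Id n)) (Id s))"
    by (rule q_sym, rule q_tens_assoc[OF tA typed.ty_id typed.ty_id]; simp)
  also have "Q (A * n + (n + s)) (n + s) ... (Tens (Comp G (xpow F (Suc A))) (Comp (Id s) (Id s)))"
    by (rule q_tens[OF H q_sym[OF q_id_l[OF typed.ty_id]]]; simp)
  also have "Q (A * n + (n + s)) (n + s) ... (Comp (Tens G (Id s)) (Tens (xpow F (Suc A)) (Id s)))"
    by (rule q_sym, rule q_inter[OF typed.ty_G tA1 typed.ty_id typed.ty_id]; simp)
  finally show ?thesis .
qed

lemma stepG: "Q (n + s) (A * n + (n + s)) (Tens (xpow G A) (Id (n + s)))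
   (Comp (Tens (xpow G (Suc A)) (Id s)) (Tens F (Id s)))"
proof -
  note tA = TG[of A]
  have tA1: "T (xpow G (Suc A)) 0 (Suc A * n)" by (rule TG)
  have "Q n (A * n + n) (Tens (xpow G A) (Id n)) (Tens (Comp (xpow G A) (Id 0)) (Comp G F))"
    by (rule q_tens[OF q_sym[OF q_id_r[OF tA]] q_sym[OF q_gf]]; simp)
  also have "Q n (A * n + n) ... (Comp (Tens (xpow G A) G) (Tens (Id 0) F))"
    by (rule q_sym, rule q_inter[OF tA typed.ty_id typed.ty_G typed.ty_F]; simp)
  also have "Q n (A * n + n) ... (Comp (xpow G (Suc A)) F)"
  proof (rule q_comp)
    show "Q n 0 (Tens (Id 0) F) F" by (rule q_unit_l[OF typed.ty_F])
    have "Q 0 (A * n + n) (Tens (xpow G A) G) (Tens (xpow G A) (xpow G 1))"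
      by (simp, rule q_tens[OF q_refl[OF tA] q_sym[OF q_unit_r[OF typed.ty_G]]]; simp)
    also have "Q 0 (A * n + n) ... (xpow G (A + 1))" using xpow_add[OF typed.ty_G, of A 1] by (simp add: algebra_simps)
    finally show "Q 0 (A * n + n) (Tens (xpow G A) G) (xpow G (Suc A))" by simp
  qed
  finally have H: "Q n (A * n + n) (Tens (xpow G A) (Id n)) (Comp (xpow G (Suc A)) F)" .
  have "Q (n + s) (A * n + (n + s)) (Tens (xpow G A) (Id (n + s))) (Tens (xpow G A) (Tens (Id n) (Id s)))"
    by (rule q_tens[OF q_refl[OF tA] q_sym[OF q_id_tens]]; simp)
  also have "Q (n + s) (A * n + (n + s)) ... (Tens (Tens (xpow G A) (Id n)) (Id s))"
    by (rule q_sym, rule q_tens_assoc[OF tA typed.ty_id typed.ty_id]; simp)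
  also have "Q (n + s) (A * n + (n + s)) ... (Tens (Comp (xpow G (Suc A)) F) (Comp (Id s) (Id s)))"
    by (rule q_tens[OF H q_sym[OF q_id_l[OF typed.ty_id]]]; simp)
  also have "Q (n + s) (A * n + (n + s)) ... (Comp (Tens (xpow G (Suc A)) (Id s)) (Tens F (Id s)))"
    by (rule q_sym, rule q_inter[OF tA1 typed.ty_F typed.ty_id typed.ty_id]; simp)
  finally show ?thesis .
qed


definition psiG :: "nat \<Rightarrow> 'k mexp" where
  "psiG t = (if t < n then Id t else Tens G (Id (t - n)))"

definition psiF :: "nat \<Rightarrow> 'k mexp" where
  "psiF t = (if t < n then Id t else Tens F (Id (t - n)))"

lemma DD:
  assumes np: "0 < n"
  shows "\<exists>k. Q (x + x') (x mod n + x' mod n) (Tens (down x) (down x'))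
     (Scal k (Comp (psiG (x mod n + x' mod n)) (down (x + x'))))"
proof -
  define a where "a = x div n"
  define b where "b = x' div n"
  define r where "r = x mod n"
  define r' where "r' = x' mod n"
  define t where "t = r + r'"
  have xx: "x + x' = (a + b) * n + t" by (simp add: a_def b_def r_def r'_def t_def algebra_simps)
  have cm: "\<exists>k. Q (r + b * n) (r + b * 0) (Tens (Id r) (xpow F b)) (Scal k (Tens (xpow F b) (Id r)))"
    using commF[of r b] by simp
  obtain k where k: "Q ((a * n + r) + (b * n + r')) ((a * 0 + r) + (b * 0 + r'))
     (Tens (Tens (xpow F a) (Id r)) (Tens (xpow F b) (Id r'))) (Scal k (Tens (xpow F (a + b)) (Id (r + r'))))"
    using merge[OF typed.ty_F cm, of a r'] by blast
  have k': "Q (x + x') t (Tens (down x) (down x')) (Scal k (Tens (xpow F (a + b)) (Id t)))"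
    using k unfolding down_def a_def b_def r_def r'_def t_def by (simp add: algebra_simps)
  have tW: "T (Tens (xpow F (a + b)) (Id t)) (x + x') t" unfolding xx by (rule T_tens[OF TF typed.ty_id]; simp)
  note dm = divmod_add[OF np, of x x']
  have W: "Q (x + x') t (Tens (xpow F (a + b)) (Id t)) (Comp (psiG t) (down (x + x')))"
  proof (cases "t < n")
    case True
    then have "down (x + x') = Tens (xpow F (a + b)) (Id t)" "psiG t = Id t"
      using dm unfolding down_def psiG_def a_def b_def r_def r'_def t_def by auto
    then show ?thesis using q_sym[OF q_id_l[OF tW]] by simp
  next
    case False
    then have "down (x + x') = Tens (xpow F (Suc (a + b))) (Id (t - n))" "psiG t = Tens G (Id (t - n))"
      using dm unfolding down_def psiG_def a_def b_def r_def r'_def t_def by auto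
    moreover have "n + (t - n) = t" using False by simp
    ultimately show ?thesis using stepF[of "a + b" "t - n"] xx by simp
  qed
  show ?thesis using q_trans[OF k' q_scal[OF W]] unfolding t_def r_def r'_def by blast
qed

lemma UU:
  assumes np: "0 < n"
  shows "\<exists>k. Q (x mod n + x' mod n) (x + x') (Tens (up x) (up x'))
     (Scal k (Comp (up (x + x')) (psiF (x mod n + x' mod n))))"
proof -
  define a where "a = x div n"
  define b where "b = x' div n"
  define r where "r = x mod n"
  define r' where "r' = x' mod n"
  define t where "t = r + r'"
  have xx: "x + x' = (a + b) * n + t" by (simp add: a_def b_def r_def r'_def t_def algebra_simps)
  have cm: "\<exists>k. Q (r + b * 0) (r + b * n) (Tens (Id r) (xpow G b)) (Scal k (Tens (xpow G b) (Id r)))"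
    using commG[of r b] by simp
  obtain k where k: "Q ((a * 0 + r) + (b * 0 + r')) ((a * n + r) + (b * n + r'))
     (Tens (Tens (xpow G a) (Id r)) (Tens (xpow G b) (Id r'))) (Scal k (Tens (xpow G (a + b)) (Id (r + r'))))"
    using merge[OF typed.ty_G cm, of a r'] by blast
  have k': "Q t (x + x') (Tens (up x) (up x')) (Scal k (Tens (xpow G (a + b)) (Id t)))"
    using k unfolding up_def a_def b_def r_def r'_def t_def by (simp add: algebra_simps)
  have tW: "T (Tens (xpow G (a + b)) (Id t)) t (x + x')" unfolding xx by (rule T_tens[OF TG typed.ty_id]; simp)
  note dm = divmod_add[OF np, of x x']
  have W: "Q t (x + x') (Tens (xpow G (a + b)) (Id t)) (Comp (up (x + x')) (psiF t))"
  proof (cases "t < n")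
    case True
    then have "up (x + x') = Tens (xpow G (a + b)) (Id t)" "psiF t = Id t"
      using dm unfolding up_def psiF_def a_def b_def r_def r'_def t_def by auto
    then show ?thesis using q_sym[OF q_id_r[OF tW]] by simp
  next
    case False
    then have "up (x + x') = Tens (xpow G (Suc (a + b))) (Id (t - n))" "psiF t = Tens F (Id (t - n))"
      using dm unfolding up_def psiF_def a_def b_def r_def r'_def t_def by auto
    moreover have "n + (t - n) = t" using False by simp
    ultimately show ?thesis using stepG[of "t - n" "a + b"] xx by simp
  qed
  show ?thesis using q_trans[OF k' q_scal[OF W]] unfolding t_def r_def r'_def by blast
qed


lemma psi:
  assumes np: "0 < n" and tl: "t < 2 * n"
  shows "Q (if t < n then t else t - n) (if t < n then t else t - n) (Comp (psiF t) (psiG t)) (Id (if t < n then t else t - n))"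
proof (cases "t < n")
  case True
  then show ?thesis unfolding psiF_def psiG_def using q_id_l[OF typed.ty_id, of t] by simp
next
  case False
  have "Q (t - n) (t - n) (Comp (Tens F (Id (t - n))) (Tens G (Id (t - n)))) (Tens (Comp F G) (Comp (Id (t - n)) (Id (t - n))))"
    by (rule q_inter[OF typed.ty_F typed.ty_G typed.ty_id typed.ty_id]; simp)
  also have "Q (t - n) (t - n) ... (Tens (Id 0) (Id (t - n)))"
    by (rule q_tens[OF q_fg q_id_l[OF typed.ty_id]]; simp)
  also have "Q (t - n) (t - n) ... (Id (t - n))" by (rule q_id_tens; simp)
  finally show ?thesis unfolding psiF_def psiG_def using False by simp
qed

lemma T_psiG: "t < 2 * n \<Longrightarrow> T (psiG t) (if t < n then t else t - n) t"
  unfolding psiG_def by (auto intro!: typed.intros T_tens)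

lemma T_psiF: "t < 2 * n \<Longrightarrow> T (psiF t) t (if t < n then t else t - n)"
  unfolding psiF_def by (auto intro!: typed.intros T_tens)

lemma glue:
  assumes np: "0 < n" and m1: "x mod n = y mod n" and m2: "x' mod n = y' mod n"
  shows "\<exists>k. Q (x + x') (y + y') (Tens (Comp (up y) (down x)) (Comp (up y') (down x')))
     (Scal k (Comp (up (y + y')) (down (x + x'))))"
proof -
  define t where "t = x mod n + x' mod n"
  define s where "s = (if t < n then t else t - n)"
  have tl: "t < 2 * n" unfolding t_def using np by (simp add: mult_2 add_strict_mono)
  have sx: "(x + x') mod n = s" using divmod_add[OF np, of x x'] unfolding s_def t_def by simp
  have sy: "(y + y') mod n = s" using divmod_add[OF np, of y y'] m1 m2 unfolding s_def t_def by simp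
  obtain k1 where k1: "Q (x + x') t (Tens (down x) (down x')) (Scal k1 (Comp (psiG t) (down (x + x'))))"
    using DD[OF np, of x x'] unfolding t_def by blast
  obtain k2 where k2: "Q t (y + y') (Tens (up y) (up y')) (Scal k2 (Comp (up (y + y')) (psiF t)))"
    using UU[OF np, of y y'] m1 m2 unfolding t_def by auto
  have tDX: "T (down (x + x')) (x + x') s" using T_down[of "x + x'"] sx by simp
  have tUY: "T (up (y + y')) s (y + y')" using T_up[of "y + y'"] sy by simp
  have tpG: "T (psiG t) s t" using T_psiG[OF tl] unfolding s_def .
  have tpF: "T (psiF t) t s" using T_psiF[OF tl] unfolding s_def .
  have ps: "Q s s (Comp (psiF t) (psiG t)) (Id s)" using psi[OF np tl] unfolding s_def .
  have tux: "T (up y) (x mod n) y" using T_up[of y] m1 by simp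
  have tux': "T (up y') (x' mod n) y'" using T_up[of y'] m2 by simp
  have "Q (x + x') (y + y') (Tens (Comp (up y) (down x)) (Comp (up y') (down x')))
      (Comp (Tens (up y) (up y')) (Tens (down x) (down x')))"
    by (rule q_sym, rule q_inter[OF tux T_down tux' T_down]; simp)
  also have "Q (x + x') (y + y') ... (Comp (Scal k2 (Comp (up (y + y')) (psiF t))) (Scal k1 (Comp (psiG t) (down (x + x')))))"
    by (rule q_comp[OF k2 k1])
  also have "Q (x + x') (y + y') ... (Scal k2 (Comp (Comp (up (y + y')) (psiF t)) (Scal k1 (Comp (psiG t) (down (x + x'))))))"
    by (rule q_comp_scal_l) (auto intro: typed.intros tUY tpF tpG tDX)
  also have "Q (x + x') (y + y') ... (Scal k2 (Scal k1 (Comp (Comp (up (y + y')) (psiF t)) (Comp (psiG t) (down (x + x'))))))"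
    by (rule q_scal, rule q_comp_scal_r) (auto intro: typed.intros tUY tpF tpG tDX)
  also have "Q (x + x') (y + y') ... (Scal (k2 * k1) (Comp (Comp (up (y + y')) (psiF t)) (Comp (psiG t) (down (x + x')))))"
    by (rule q_scal_scal) (auto intro: typed.intros tUY tpF tpG tDX)
  also have "Q (x + x') (y + y') ... (Scal (k2 * k1) (Comp (up (y + y')) (Comp (psiF t) (Comp (psiG t) (down (x + x'))))))"
    by (rule q_scal, rule q_comp_assoc) (auto intro: typed.intros tUY tpF tpG tDX)
  also have "Q (x + x') (y + y') ... (Scal (k2 * k1) (Comp (up (y + y')) (Comp (Comp (psiF t) (psiG t)) (down (x + x')))))"
    by (rule q_scal, rule q_comp[OF q_refl[OF tUY]], rule q_sym, rule q_comp_assoc[OF tDX tpG tpF])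
  also have "Q (x + x') (y + y') ... (Scal (k2 * k1) (Comp (up (y + y')) (Comp (Id s) (down (x + x')))))"
    by (rule q_scal, rule q_comp[OF q_refl[OF tUY]], rule q_comp[OF ps q_refl[OF tDX]])
  also have "Q (x + x') (y + y') ... (Scal (k2 * k1) (Comp (up (y + y')) (down (x + x'))))"
    by (rule q_scal, rule q_comp[OF q_refl[OF tUY] q_id_l[OF tDX]])
  finally show ?thesis by blast
qed


definition phi :: "nat \<Rightarrow> nat \<Rightarrow> 'k mexp" where
  "phi x y = (if x mod n = y mod n then Comp (up y) (down x) else Zero x y)"

lemma T_phi: "T (phi x y) x y"
proof (cases "x mod n = y mod n")
  case True
  have "T (up y) (x mod n) y" using T_up[of y] True by simp
  then show ?thesis unfolding phi_def using True typed.ty_comp[OF _ T_down] by simp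
qed (simp add: phi_def typed.ty_zero)

lemma compZr: "T a y w \<Longrightarrow> T W x w \<Longrightarrow> Q x w (Comp a (Zero x y)) (Scal 0 W)"
proof -
  assume ta: "T a y w" and tW: "T W x w"
  have "Q x w (Comp a (Zero x y)) (Comp a (Scal 0 (Zero x y)))"
    by (rule q_comp[OF q_refl[OF ta] q_sym[OF q_scal0[OF typed.ty_zero]]])
  also have "Q x w ... (Scal 0 (Comp a (Zero x y)))" by (rule q_comp_scal_r[OF ta typed.ty_zero])
  also have "Q x w ... (Scal 0 W)" by (rule q_kill[OF typed.ty_comp[OF ta typed.ty_zero] tW])
  finally show ?thesis .
qed

lemma compZl: "T b x y \<Longrightarrow> T W x w \<Longrightarrow> Q x w (Comp (Zero y w) b) (Scal 0 W)"
proof -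
  assume tb: "T b x y" and tW: "T W x w"
  have "Q x w (Comp (Zero y w) b) (Comp (Scal 0 (Zero y w)) b)"
    by (rule q_comp[OF q_sym[OF q_scal0[OF typed.ty_zero]] q_refl[OF tb]])
  also have "Q x w ... (Scal 0 (Comp (Zero y w) b))" by (rule q_comp_scal_l[OF typed.ty_zero tb])
  also have "Q x w ... (Scal 0 W)" by (rule q_kill[OF typed.ty_comp[OF typed.ty_zero tb] tW])
  finally show ?thesis .
qed

lemma tensZr: "T a x y \<Longrightarrow> T W (x + x') (y + y') \<Longrightarrow> Q (x + x') (y + y') (Tens a (Zero x' y')) (Scal 0 W)"
proof -
  assume ta: "T a x y" and tW: "T W (x + x') (y + y')"
  have "Q (x + x') (y + y') (Tens a (Zero x' y')) (Tens a (Scal 0 (Zero x' y')))"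
    by (rule q_tens[OF q_refl[OF ta] q_sym[OF q_scal0[OF typed.ty_zero]]]; simp)
  also have "Q (x + x') (y + y') ... (Scal 0 (Tens a (Zero x' y')))" by (rule q_tens_scal_r[OF ta typed.ty_zero]; simp)
  also have "Q (x + x') (y + y') ... (Scal 0 W)" by (rule q_kill[OF typed.ty_tens[OF ta typed.ty_zero] tW])
  finally show ?thesis .
qed

lemma tensZl: "T b x' y' \<Longrightarrow> T W (x + x') (y + y') \<Longrightarrow> Q (x + x') (y + y') (Tens (Zero x y) b) (Scal 0 W)"
proof -
  assume tb: "T b x' y'" and tW: "T W (x + x') (y + y')"
  have "Q (x + x') (y + y') (Tens (Zero x y) b) (Tens (Scal 0 (Zero x y)) b)"
    by (rule q_tens[OF q_sym[OF q_scal0[OF typed.ty_zero]] q_refl[OF tb]]; simp)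
  also have "Q (x + x') (y + y') ... (Scal 0 (Tens (Zero x y) b))" by (rule q_tens_scal_l[OF typed.ty_zero tb]; simp)
  also have "Q (x + x') (y + y') ... (Scal 0 W)" by (rule q_kill[OF typed.ty_tens[OF typed.ty_zero tb] tW])
  finally show ?thesis .
qed

lemma span:
  assumes np: "0 < n"
  shows "T e x y \<Longrightarrow> \<exists>c. Q x y e (Scal c (phi x y))"
proof (induction rule: typed.induct)
  case (ty_id m)
  have "Q m m (Id m) (Comp (up m) (down m))" by (rule q_sym[OF K2])
  also have "Q m m ... (Scal 1 (Comp (up m) (down m)))"
    by (rule q_sym, rule q_scal_one, rule typed.ty_comp[OF T_up T_down])
  finally show ?case unfolding phi_def by auto
next
  case ty_F
  have ph: "phi n 0 = Comp (Tens (Id 0) (Id 0)) (Tens (Tens F (Id 0)) (Id 0))"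
    unfolding phi_def up_def down_def using np by simp
  have tF0: "T (Tens F (Id 0)) n 0" by (rule T_tens[OF typed.ty_F typed.ty_id]; simp)
  have tF00: "T (Tens (Tens F (Id 0)) (Id 0)) n 0" by (rule T_tens[OF tF0 typed.ty_id]; simp)
  have "Q n 0 F (Tens F (Id 0))" by (rule q_sym[OF q_unit_r[OF typed.ty_F]])
  also have "Q n 0 ... (Tens (Tens F (Id 0)) (Id 0))" by (rule q_sym[OF q_unit_r[OF tF0]])
  also have "Q n 0 ... (Comp (Id 0) (Tens (Tens F (Id 0)) (Id 0)))" by (rule q_sym[OF q_id_l[OF tF00]])
  also have "Q n 0 ... (Comp (Tens (Id 0) (Id 0)) (Tens (Tens F (Id 0)) (Id 0)))"
    by (rule q_comp[OF q_sym[OF q_id_tens] q_refl[OF tF00]]; simp)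
  also have "Q n 0 ... (Scal 1 (Comp (Tens (Id 0) (Id 0)) (Tens (Tens F (Id 0)) (Id 0))))"
    by (rule q_sym, rule q_scal_one) (use T_phi[of n 0] ph in simp)
  finally show ?case unfolding ph by blast
next
  case ty_G
  have ph: "phi 0 n = Comp (Tens (Tens G (Id 0)) (Id 0)) (Tens (Id 0) (Id 0))"
    unfolding phi_def up_def down_def using np by simp
  have tG0: "T (Tens G (Id 0)) 0 n" by (rule T_tens[OF typed.ty_G typed.ty_id]; simp)
  have tG00: "T (Tens (Tens G (Id 0)) (Id 0)) 0 n" by (rule T_tens[OF tG0 typed.ty_id]; simp)
  have "Q 0 n G (Tens G (Id 0))" by (rule q_sym[OF q_unit_r[OF typed.ty_G]])
  also have "Q 0 n ... (Tens (Tens G (Id 0)) (Id 0))" by (rule q_sym[OF q_unit_r[OF tG0]])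
  also have "Q 0 n ... (Comp (Tens (Tens G (Id 0)) (Id 0)) (Id 0))" by (rule q_sym[OF q_id_r[OF tG00]])
  also have "Q 0 n ... (Comp (Tens (Tens G (Id 0)) (Id 0)) (Tens (Id 0) (Id 0)))"
    by (rule q_comp[OF q_refl[OF tG00] q_sym[OF q_id_tens]]; simp)
  also have "Q 0 n ... (Scal 1 (Comp (Tens (Tens G (Id 0)) (Id 0)) (Tens (Id 0) (Id 0))))"
    by (rule q_sym, rule q_scal_one) (use T_phi[of 0 n] ph in simp)
  finally show ?case unfolding ph by blast
next
  case (ty_comp a y w b x)
  obtain c where c: "Q y w a (Scal c (phi y w))" using ty_comp.IH(1) by blast
  obtain d where d: "Q x y b (Scal d (phi x y))" using ty_comp.IH(2) by blast
  note t1 = T_phi[of y w] and t2 = T_phi[of x y]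
  have "Q x w (Comp a b) (Comp (Scal c (phi y w)) (Scal d (phi x y)))" by (rule q_comp[OF c d])
  also have "Q x w ... (Scal c (Comp (phi y w) (Scal d (phi x y))))"
    by (rule q_comp_scal_l[OF t1 typed.ty_scal[OF t2]])
  also have "Q x w ... (Scal c (Scal d (Comp (phi y w) (phi x y))))"
    by (rule q_scal, rule q_comp_scal_r[OF t1 t2])
  also have "Q x w ... (Scal (c * d) (Comp (phi y w) (phi x y)))"
    by (rule q_scal_scal[OF typed.ty_comp[OF t1 t2]])
  finally have E: "Q x w (Comp a b) (Scal (c * d) (Comp (phi y w) (phi x y)))" .
  have "\<exists>c'. Q x w (Comp (phi y w) (phi x y)) (Scal c' (phi x w))"
  proof (cases "x mod n = y mod n \<and> y mod n = w mod n")
    case True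
    have tu: "T (up w) (y mod n) w" using T_up[of w] True by simp
    have td: "T (down x) x (y mod n)" using T_down[of x] True by simp
    have "Q x w (Comp (phi y w) (phi x y)) (Comp (Comp (up w) (down y)) (Comp (up y) (down x)))"
      unfolding phi_def using True q_refl[OF typed.ty_comp[OF t1 t2]] unfolding phi_def by simp
    also have "Q x w ... (Comp (up w) (Comp (down y) (Comp (up y) (down x))))"
      by (rule q_comp_assoc[OF typed.ty_comp[OF T_up td] T_down tu])
    also have "Q x w ... (Comp (up w) (Comp (Comp (down y) (up y)) (down x)))"
      by (rule q_comp[OF q_refl[OF tu]], rule q_sym, rule q_comp_assoc[OF td T_up T_down])
    also have "Q x w ... (Comp (up w) (Comp (Id (y mod n)) (down x)))"
      by (rule q_comp[OF q_refl[OF tu]], rule q_comp[OF K1 q_refl[OF td]])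
    also have "Q x w ... (Comp (up w) (down x))"
      by (rule q_comp[OF q_refl[OF tu] q_id_l[OF td]])
    also have "Q x w ... (Scal 1 (Comp (up w) (down x)))"
      by (rule q_sym, rule q_scal_one, rule typed.ty_comp[OF tu td])
    finally show ?thesis unfolding phi_def using True by auto
  next
    case False
    then have "x mod n \<noteq> y mod n \<or> y mod n \<noteq> w mod n" by blast
    then show ?thesis
    proof
      assume "x mod n \<noteq> y mod n"
      then have "phi x y = Zero x y" unfolding phi_def by simp
      then show ?thesis using compZr[OF t1 T_phi[of x w]] by auto
    next
      assume "y mod n \<noteq> w mod n"
      then have "phi y w = Zero y w" unfolding phi_def by simp
      then show ?thesis using compZl[OF t2 T_phi[of x w]] by auto
    qed
  qed
  then obtain c' where "Q x w (Comp (phi y w) (phi x y)) (Scal c' (phi x w))" by blast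
  from q_trans[OF E q_scal_cong[OF this]] show ?case by blast
next
  case (ty_tens a x y b x' y')
  obtain c where c: "Q x y a (Scal c (phi x y))" using ty_tens.IH(1) by blast
  obtain d where d: "Q x' y' b (Scal d (phi x' y'))" using ty_tens.IH(2) by blast
  note t1 = T_phi[of x y] and t2 = T_phi[of x' y']
  have t12: "T (Tens (phi x y) (phi x' y')) (x + x') (y + y')" by (rule typed.ty_tens[OF t1 t2])
  have "Q (x + x') (y + y') (Tens a b) (Tens (Scal c (phi x y)) (Scal d (phi x' y')))" by (rule q_tens[OF c d]; simp)
  also have "Q (x + x') (y + y') ... (Scal c (Tens (phi x y) (Scal d (phi x' y'))))"
    by (rule q_tens_scal_l[OF t1 typed.ty_scal[OF t2]]; simp)
  also have "Q (x + x') (y + y') ... (Scal c (Scal d (Tens (phi x y) (phi x' y'))))"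
    by (rule q_scal, rule q_tens_scal_r[OF t1 t2]; simp)
  also have "Q (x + x') (y + y') ... (Scal (c * d) (Tens (phi x y) (phi x' y')))"
    by (rule q_scal_scal[OF t12])
  finally have E: "Q (x + x') (y + y') (Tens a b) (Scal (c * d) (Tens (phi x y) (phi x' y')))" .
  have "\<exists>c'. Q (x + x') (y + y') (Tens (phi x y) (phi x' y')) (Scal c' (phi (x + x') (y + y')))"
  proof (cases "x mod n = y mod n \<and> x' mod n = y' mod n")
    case True
    have "(x + x') mod n = (y + y') mod n" using True by (metis mod_add_cong)
    then show ?thesis using glue[OF np] True unfolding phi_def by simp
  next
    case False
    then have "x mod n \<noteq> y mod n \<or> x' mod n \<noteq> y' mod n" by blast
    then show ?thesis
    proof
      assume "x mod n \<noteq> y mod n"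
      then have "phi x y = Zero x y" unfolding phi_def by simp
      then show ?thesis using tensZl[OF t2 T_phi[of "x + x'" "y + y'"]] by auto
    next
      assume "x' mod n \<noteq> y' mod n"
      then have "phi x' y' = Zero x' y'" unfolding phi_def by simp
      then show ?thesis using tensZr[OF t1 T_phi[of "x + x'" "y + y'"]] by auto
    qed
  qed
  then obtain c' where "Q (x + x') (y + y') (Tens (phi x y) (phi x' y')) (Scal c' (phi (x + x') (y + y')))" by blast
  from q_trans[OF E q_scal_cong[OF this]] show ?case by blast
next
  case (ty_scal a x y d)
  obtain c where c: "Q x y a (Scal c (phi x y))" using ty_scal.IH by blast
  from q_scal_cong[OF c, of d] show ?case by blast
next
  case (ty_add a x y b)
  obtain c where c: "Q x y a (Scal c (phi x y))" using ty_add.IH(1) by blast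
  obtain d where d: "Q x y b (Scal d (phi x y))" using ty_add.IH(2) by blast
  have "Q x y (Add a b) (Add (Scal c (phi x y)) (Scal d (phi x y)))" by (rule q_add[OF c d])
  also have "Q x y ... (Scal (c + d) (phi x y))" by (rule q_sym[OF q_add_scal[OF T_phi]])
  finally show ?case by blast
next
  case (ty_zero x y)
  show ?case using q_sym[OF q_scal0[OF T_phi[of x y]]] by blast
qed

lemma final:
  assumes np: "0 < n" and te: "T e (l * n) 0"
  shows "\<exists>c. Q (l * n) 0 e (Scal c (xpow F l))"
proof -
  obtain c where c: "Q (l * n) 0 e (Scal c (phi (l * n) 0))" using span[OF np te] by blast
  have ph: "phi (l * n) 0 = Comp (Tens (Id 0) (Id 0)) (Tens (xpow F l) (Id 0))"
    unfolding phi_def up_def down_def using np by simp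
  have tFl: "T (Tens (xpow F l) (Id 0)) (l * n) 0" by (rule T_tens[OF TF typed.ty_id]; simp)
  have "Q (l * n) 0 (Comp (Tens (Id 0) (Id 0)) (Tens (xpow F l) (Id 0))) (Comp (Id 0) (Tens (xpow F l) (Id 0)))"
    by (rule q_comp[OF q_id_tens q_refl[OF tFl]]; simp)
  also have "Q (l * n) 0 ... (Tens (xpow F l) (Id 0))" by (rule q_id_l[OF tFl])
  also have "Q (l * n) 0 ... (xpow F l)" by (rule q_unit_r[OF TF])
  finally have "Q (l * n) 0 (phi (l * n) 0) (xpow F l)" unfolding ph .
  from q_trans[OF c q_scal[OF this]] show ?thesis by blast
qed

end

theorem mainTheorem11:
  fixes \<zeta> :: "'k :: {alg_closed_field, field_char_0}"
    and n k l :: nat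
  assumes "n \<ge> 1"
    and "k = l * n"
  shows "typed n (fpow l :: 'k mexp) k 0 \<and>
         (\<forall>e :: 'k mexp. typed n e k 0 \<longrightarrow> (\<exists>c :: 'k. eqv n \<zeta> e (Scal c (fpow l)) k 0))"
proof
  show "typed n (fpow l :: 'k mexp) k 0" using L.TF[of n l] assms(2) by (simp add: fpow_xpow)
  show "\<forall>e :: 'k mexp. typed n e k 0 \<longrightarrow> (\<exists>c :: 'k. eqv n \<zeta> e (Scal c (fpow l)) k 0)"
  proof (intro allI impI)
    fix e :: "'k mexp"
    assume "typed n e k 0"
    then have "\<exists>c. EQ n \<zeta> (l * n) 0 e (Scal c (xpow F l))"
      using L.final[of n e l \<zeta>] assms by simp
    then show "\<exists>c :: 'k. eqv n \<zeta> e (Scal c (fpow l)) k 0"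
      unfolding EQ_def fpow_xpow using assms(2) by simp
  qed
qed

end
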